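(* Let $p$ be an odd prime and $0<\alpha_0<\alpha_1<\alpha_*=(p-1)/p$. There is a function $\delta(r)\to0$ as $r\to\infty$, depending only on $p,\alpha_0,\alpha_1$, such that for every $T\le r^3$, \[ \sup_{s\ge\alpha_1r}\mathbb P_s\left(\inf_{0\le t\le T}S_t<\alpha_0r\right)\le T\exp\{-(J_p(\alpha_0,\alpha_1)+\delta(r))r\}. \]
   Context: $J_p(a,b)=\int_a^b\log\left(\frac{(p-1)(1-u)}{u}\right)du$ for $0<a<b<\alpha_*$. Let $(Y_t)$ be the one-column $p$-ary transvection walk on $\mathbb F_p^r\setminus\{0\}$: at each step choose an ordered pair of distinct $i,j\in[r]$ and $a\in\mathbb F_p$ uniformly and replace $Y_i$ by $Y_i+aY_j$. $S_t=|\{i:Y_t(i)\ne0\}|$ is a birth–death chain on $\{1,\dots,r\}$ with birth probability $B_s=\frac{p-1}{p}\frac{s(r-s)}{r(r-1)}$ and death probability $D_s=\frac1p\frac{s(s-1)}{r(r-1)}$; $\mathbb P_s$ is its law from $S_0=s$. *)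

theory Defs
  imports "HOL-Probability.Probability"
begin

definition J :: "nat \<Rightarrow> real \<Rightarrow> real \<Rightarrow> real" where
  "J p a b = integral {a..b} (\<lambda>u. ln ((real p - 1) * (1 - u) / u))"

definition birth :: "nat \<Rightarrow> nat \<Rightarrow> nat \<Rightarrow> real" where
  "birth p r s = (real p - 1) / real p * (real s * (real r - real s)) / (real r * (real r - 1))"

definition death :: "nat \<Rightarrow> nat \<Rightarrow> nat \<Rightarrow> real" where
  "death p r s = 1 / real p * (real s * (real s - 1)) / (real r * (real r - 1))"

definition bd_step :: "nat \<Rightarrow> nat \<Rightarrow> nat \<Rightarrow> nat pmf" where
  "bd_step p r s =
     bind_pmf (bernoulli_pmf (birth p r s + death p r s))
       (\<lambda>moves. if moves then
           map_pmf (\<lambda>up. if up then s + 1 else s - 1)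
             (bernoulli_pmf (birth p r s / (birth p r s + death p r s)))
         else return_pmf s)"

fun bd_traj :: "nat \<Rightarrow> nat \<Rightarrow> nat \<Rightarrow> nat \<Rightarrow> nat list pmf" where
  "bd_traj p r 0 s = return_pmf [s]"
| "bd_traj p r (Suc T) s =
     bind_pmf (bd_step p r s) (\<lambda>s'. map_pmf (\<lambda>xs. s # xs) (bd_traj p r T s'))"

end

theory Submission
  imports Defs
begin


lemma prob_bind_pmf:
  "measure_pmf.prob (bind_pmf M N) X = measure_pmf.expectation M (\<lambda>x. measure_pmf.prob (N x) X)"
proof -
  have "ennreal (measure_pmf.prob (bind_pmf M N) X) = emeasure (bind_pmf M N) X"
    by (simp add: measure_pmf.emeasure_eq_measure)
  also have "\<dots> = (\<integral>\<^sup>+x. emeasure (N x) X \<partial>M)" by simp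
  also have "\<dots> = (\<integral>\<^sup>+x. ennreal (measure_pmf.prob (N x) X) \<partial>M)"
    by (simp add: measure_pmf.emeasure_eq_measure)
  also have "\<dots> = ennreal (measure_pmf.expectation M (\<lambda>x. measure_pmf.prob (N x) X))"
    by (intro nn_integral_eq_integral measure_pmf.integrable_const_bound[where B=1]) auto
  finally show ?thesis by (simp add: ennreal_inj)
qed

lemma bd_step_exp:
  fixes g :: "nat \<Rightarrow> real"
  assumes "0 \<le> birth p r x" "0 \<le> death p r x" "birth p r x + death p r x \<le> 1"
  shows "measure_pmf.expectation (bd_step p r x) g =
     birth p r x * g (x+1) + death p r x * g (x-1) + (1 - birth p r x - death p r x) * g x"
proof -
  define B where "B = birth p r x"
  define D where "D = death p r x"
  have B: "0 \<le> B" "0 \<le> D" "B + D \<le> 1" using assms by (auto simp: B_def D_def)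
  have e: "measure_pmf.expectation (bd_step p r x) g =
     measure_pmf.expectation (bernoulli_pmf (B + D)) (\<lambda>mv. measure_pmf.expectation (if mv then
           map_pmf (\<lambda>up. if up then x + 1 else x - 1)
             (bernoulli_pmf (B / (B + D)))
         else return_pmf x) g)"
    unfolding bd_step_def B_def[symmetric] D_def[symmetric]
    by (subst pmf_expectation_bind[where A=UNIV]) (auto simp: UNIV_bool integral_measure_pmf[of UNIV])
  show ?thesis
  proof (cases "B + D = 0")
    case True
    then have "B = 0" "D = 0" using B by auto
    then show ?thesis unfolding e by (simp add: B_def[symmetric] D_def[symmetric])
  next
    case False
    then have "B + D > 0" using B by auto
    have "B / (B+D) \<le> 1" using B \<open>B+D>0\<close> by (simp add: divide_le_eq_1)
    have q1: "(B+D)*(B/(B+D)) = B" "(B+D)*(1-B/(B+D)) = D" using \<open>B+D>0\<close> by (auto simp: field_simps)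
    have "measure_pmf.expectation (bd_step p r x) g = (B+D)*(B/(B+D)) * g (x+1) + (B+D)*(1-B/(B+D)) * g (x-1) + (1 - (B+D)) * g x"
      unfolding e using B \<open>B+D>0\<close> \<open>B / (B+D) \<le> 1\<close> by (simp add: algebra_simps)
    then show ?thesis unfolding q1 by (simp add: B_def D_def algebra_simps)
  qed
qed

lemma bd_bounds:
  assumes "2 \<le> p" "2 \<le> r" "1 \<le> x" "x \<le> r"
  shows "0 \<le> birth p r x" "0 \<le> death p r x" "birth p r x + death p r x \<le> 1"
proof -
  have r1: "real r * (real r - 1) > 0" using assms by auto
  have p: "real p \<ge> 2" using assms by auto
  have x: "1 \<le> real x" "real x \<le> real r" using assms by auto
  show "0 \<le> birth p r x" unfolding birth_def using r1 p x by (intro divide_nonneg_pos mult_nonneg_nonneg) auto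
  show "0 \<le> death p r x" unfolding death_def using r1 p x by (intro divide_nonneg_pos mult_nonneg_nonneg) auto
  have h1: "real x * (real r - real x) \<le> real r * (real r - 1)"
  proof -
    have "real r * (real r - 1) - real x * (real r - real x) = (real r - real x)^2 + real r * (real x - 1)"
      by (simp add: algebra_simps power2_eq_square)
    moreover have "real r * (real x - 1) \<ge> 0" using x by auto
    ultimately show ?thesis by (smt (verit) zero_le_power2)
  qed
  have h2: "real x * (real x - 1) \<le> real r * (real r - 1)"
    using x by (intro mult_mono) auto
  have "birth p r x + death p r x = ((real p - 1) * (real x * (real r - real x)) + real x * (real x - 1)) / (real p * (real r * (real r - 1)))"
  proof -
    have nz: "real p \<noteq> 0" "real r \<noteq> 0" "real r - 1 \<noteq> 0" using p r1 assms by auto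
    have "birth p r x = (real p - 1) * (real x * (real r - real x)) / (real p * (real r * (real r - 1)))"
      unfolding birth_def by simp
    moreover have "death p r x = real x * (real x - 1) / (real p * (real r * (real r - 1)))"
      unfolding death_def by simp
    ultimately show ?thesis by (simp add: add_divide_distrib)
  qed
  also have "\<dots> \<le> 1"
  proof (subst divide_le_eq_1_pos)
    show "0 < real p * (real r * (real r - 1))" using p r1 by auto
    have "(real p - 1) * (real x * (real r - real x)) \<le> (real p - 1) * (real r * (real r - 1))"
      using h1 p by (intro mult_left_mono) auto
    then show "(real p - 1) * (real x * (real r - real x)) + real x * (real x - 1) \<le> real p * (real r * (real r - 1))"
      using h2 by (simp add: algebra_simps)
  qed
  finally show "birth p r x + death p r x \<le> 1" .
qed

definition uu :: "nat \<Rightarrow> nat \<Rightarrow> real \<Rightarrow> nat \<Rightarrow> nat \<Rightarrow> real" where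
  "uu p r a T x = measure_pmf.prob (bd_traj p r T x) {xs. \<exists>y \<in> set xs. real y < a * real r}"

lemma uu_0: "uu p r a 0 x = (if real x < a * real r then 1 else 0)"
  unfolding uu_def by (simp add: indicator_def)

lemma uu_Suc: "uu p r a (Suc T) x =
  (if real x < a * real r then 1 else measure_pmf.expectation (bd_step p r x) (\<lambda>s'. uu p r a T s'))"
proof -
  have pre: "(\<lambda>xs. x # xs) -` {xs. \<exists>y \<in> set xs. real y < a * real r} =
     (if real x < a * real r then UNIV else {xs. \<exists>y \<in> set xs. real y < a * real r})"
    by auto
  show ?thesis unfolding uu_def
    by (simp add: prob_bind_pmf pre)
qed

lemma birth_pos: "1 \<le> z \<Longrightarrow> z < r \<Longrightarrow> 2 \<le> p \<Longrightarrow> birth p r z > 0"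
  unfolding birth_def by (intro divide_pos_pos mult_pos_pos) auto

lemma death_pos: "2 \<le> z \<Longrightarrow> 2 \<le> r \<Longrightarrow> 2 \<le> p \<Longrightarrow> death p r z > 0"
  unfolding death_def by (intro divide_pos_pos mult_pos_pos) auto

lemma birth_r: "birth p r r = 0" unfolding birth_def by simp

lemma hit_bound:
  assumes p2: "2 \<le> p" "2 \<le> r" "2 \<le> c" "c \<le> m" "m < r"
    and cA: "\<And>x. real x < a * real r \<longleftrightarrow> x < c"
  defines "\<rho> \<equiv> \<lambda>z. death p r z / birth p r z"
  defines "w \<equiv> \<lambda>y. \<Prod>z\<in>{c..y}. \<rho> z"
  defines "H \<equiv> \<lambda>x. \<Sum>y\<in>{x..<m}. w y"
  defines "\<epsilon> \<equiv> death p r m * w (m-1)"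
  shows "x \<in> {1..r} \<Longrightarrow> uu p r a T x \<le> real T * \<epsilon> + H x"
proof -
  have w_nn: "w y \<ge> 0" if "y < m" for y
    unfolding w_def \<rho>_def using that p2
    by (intro prod_nonneg ballI divide_nonneg_nonneg less_imp_le[OF death_pos] less_imp_le[OF birth_pos]) auto
  have H_nn: "H x \<ge> 0" for x unfolding H_def using w_nn by (intro sum_nonneg) auto
  have H1: "H x \<ge> 1" if "x < c" for x
  proof -
    have "w (c-1) = 1" unfolding w_def using p2 by simp
    moreover have "w (c-1) \<le> H x" unfolding H_def using that p2 w_nn
      by (intro member_le_sum) auto
    ultimately show ?thesis by simp
  qed
  have Hsplit: "H x = w x + H (x+1)" if "x < m" for x
    unfolding H_def using that by (simp add: sum.atLeast_Suc_lessThan)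
  have H0: "H x = 0" if "m \<le> x" for x unfolding H_def using that by simp
  have wrec: "w x = w (x-1) * \<rho> x" if cx: "c \<le> x" for x
  proof -
    obtain k where k: "x = Suc k" using cx p2 by (cases x) auto
    show ?thesis unfolding w_def k using that k by (simp add: prod.cl_ivl_Suc)
  qed
  have eps_nn: "\<epsilon> \<ge> 0" unfolding \<epsilon>_def using p2 w_nn
    by (intro mult_nonneg_nonneg less_imp_le[OF death_pos]) auto
  show "x \<in> {1..r} \<Longrightarrow> uu p r a T x \<le> real T * \<epsilon> + H x"
  proof (induction T arbitrary: x)
    case 0
    then show ?case using H1 H_nn by (auto simp: uu_0 cA)
  next
    case (Suc T)
    show ?case
    proof (cases "x < c")
      case True
      have "0 \<le> (1 + real T) * \<epsilon>" using eps_nn by simp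
      then show ?thesis using H1[OF True] True by (simp add: uu_Suc cA)
    next
      case False
      define B where "B = birth p r x"
      define D where "D = death p r x"
      have x: "1 \<le> x" "x \<le> r" "c \<le> x" "2 \<le> x" using Suc.prems False p2 by auto
      have BD: "0 \<le> B" "0 \<le> D" "B + D \<le> 1" using bd_bounds[OF p2(1,2) x(1,2)] by (auto simp: B_def D_def)
      define v where "v y = real T * \<epsilon> + H y" for y
      have u_eq: "uu p r a (Suc T) x = B * uu p r a T (x+1) + D * uu p r a T (x-1) + (1-B-D) * uu p r a T x"
        using False bd_step_exp[OF BD[unfolded B_def D_def]] by (simp add: uu_Suc cA B_def D_def)
      have b1: "B * uu p r a T (x+1) \<le> B * v (x+1)"
      proof (cases "x < r")
        case True
        then show ?thesis using Suc.IH[of "x+1"] BD by (intro mult_left_mono) (auto simp: v_def)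
      next
        case False
        then have "x = r" using x by auto
        then show ?thesis by (simp add: B_def birth_r)
      qed
      have b2: "D * uu p r a T (x-1) \<le> D * v (x-1)"
        using Suc.IH[of "x-1"] BD x by (intro mult_left_mono) (simp_all add: v_def, linarith)
      have b3: "(1-B-D) * uu p r a T x \<le> (1-B-D) * v x"
        using Suc.IH[of "x"] BD x by (intro mult_left_mono) (auto simp: v_def)
      have "uu p r a (Suc T) x \<le> B * v (x+1) + D * v (x-1) + (1-B-D) * v x"
        using u_eq b1 b2 b3 by linarith
      also have "\<dots> = real T * \<epsilon> + (B * H (x+1) + D * H (x-1) + (1-B-D) * H x)"
        by (simp add: v_def algebra_simps)
      also have "B * H (x+1) + D * H (x-1) + (1-B-D) * H x \<le> H x + \<epsilon>"
      proof -
        consider "x < m" | "x = m" | "x > m" by linarith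
        then show ?thesis
        proof cases
          case 1
          have Bp: "B > 0" unfolding B_def using x 1 p2 by (intro birth_pos) auto
          have "H (x-1) = w (x-1) + H x" using Hsplit[of "x-1"] 1 x by simp
          moreover have "H x = w x + H (x+1)" using Hsplit 1 by simp
          moreover have "B * w x = D * w (x-1)"
            using wrec[OF x(3)] Bp unfolding \<rho>_def B_def D_def by simp
          ultimately have "B * H (x+1) + D * H (x-1) + (1-B-D) * H x = H x"
            by (simp add: algebra_simps)
          then show ?thesis using eps_nn by simp
        next
          case 2
          have "H (x-1) = w (x-1)" using Hsplit[of "x-1"] 2 x H0[of m] by simp
          then show ?thesis using 2 H0 by (simp add: \<epsilon>_def D_def)
        next
          case 3
          then show ?thesis using H0 eps_nn by simp
        qed
      qed
      finally show ?thesis by (simp add: algebra_simps)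
    qed
  qed
qed



definition ff :: "nat \<Rightarrow> real \<Rightarrow> real" where
  "ff p u = ln ((real p - 1) * (1 - u) / u)"
definition FF :: "nat \<Rightarrow> real \<Rightarrow> real" where
  "FF p u = u * ln (real p - 1) - u * ln u - (1 - u) * ln (1 - u)"

lemma ff_alt: "2 \<le> p \<Longrightarrow> 0 < u \<Longrightarrow> u < 1 \<Longrightarrow> ff p u = ln (real p - 1) + ln (1 - u) - ln u"
  unfolding ff_def by (simp add: ln_div ln_mult)

lemma DERIV_FF: assumes "2 \<le> p" "0 < u" "u < 1"
  shows "(FF p has_real_derivative ff p u) (at u)"
proof -
  have "(FF p has_real_derivative (ln (real p - 1) - (1 * ln u + u * (1/u)) - ((-1) * ln (1-u) + (1-u) * (-1/(1-u))))) (at u)"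
    unfolding FF_def using assms
    by (auto intro!: derivative_eq_intros)
  moreover have "ln (real p - 1) - (1 * ln u + u * (1/u)) - ((-1) * ln (1-u) + (1-u) * (-1/(1-u))) = ff p u"
    using assms by (simp add: ff_alt field_simps)
  ultimately show ?thesis by simp
qed

lemma J_eq: assumes "2 \<le> p" "0 < a" "a \<le> b" "b < 1"
  shows "J p a b = FF p b - FF p a"
proof -
  have "(ff p has_integral (FF p b - FF p a)) {a..b}"
  proof (rule fundamental_theorem_of_calculus[OF assms(3)])
    fix x assume "x \<in> {a..b}"
    then have "0 < x" "x < 1" using assms by auto
    then show "(FF p has_vector_derivative ff p x) (at x within {a..b})"
      using DERIV_FF[OF assms(1)] has_real_derivative_iff_has_vector_derivative
      by (metis has_field_derivative_at_within)
  qed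
  then show ?thesis unfolding J_def ff_def[abs_def] by (rule integral_unique)
qed

lemma ff_mono: assumes "2 \<le> p" "0 < u" "u \<le> v" "v < 1" shows "ff p v \<le> ff p u"
proof -
  have "ln (1 - v) \<le> ln (1 - u)" using assms by simp
  moreover have "ln u \<le> ln v" using assms by simp
  ultimately show ?thesis using assms by (simp add: ff_alt del: ln_le_cancel_iff)
qed

lemma FF_step: assumes "2 \<le> p" "0 < y" "y < x" "x < 1"
  shows "FF p x - FF p y \<le> (x - y) * ff p y"
proof -
  obtain z where z: "y < z" "z < x" "FF p x - FF p y = (x - y) * ff p z"
    using MVT2[OF assms(3), of "FF p" "ff p"] DERIV_FF[OF assms(1)] assms by force
  have "ff p z \<le> ff p y" using ff_mono[OF assms(1,2)] z assms by auto
  then show ?thesis using z assms by (simp add: mult_left_mono)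
qed


lemma term_bound:
  assumes "2 \<le> p" "2 \<le> z" "z + 1 < r"
  shows "real r * (FF p ((real z + 1) / real r) - FF p (real z / real r)) \<le> - ln (death p r z / birth p r z)"
proof -
  have r: "real r > 0" "real z + 1 < real r" "2 \<le> real z" using assms by auto
  have B: "birth p r z > 0" using assms by (intro birth_pos) auto
  have D: "death p r z > 0" using assms by (intro death_pos) auto
  have y: "0 < real z / real r" "real z / real r < (real z + 1) / real r" "(real z + 1) / real r < 1"
    using r by (auto simp: field_simps)
  have "FF p ((real z + 1) / real r) - FF p (real z / real r) \<le> ((real z + 1) / real r - real z / real r) * ff p (real z / real r)"
    by (rule FF_step[OF assms(1) y])
  also have "((real z + 1) / real r - real z / real r) = 1 / real r" using r by (simp add: field_simps)
  finally have s1: "real r * (FF p ((real z + 1) / real r) - FF p (real z / real r)) \<le> ff p (real z / real r)"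
    using r by (simp add: field_simps)
  have "ff p (real z / real r) = ln ((real p - 1) * (real r - real z) / real z)"
  proof -
    have "(real p - 1) * (1 - real z / real r) / (real z / real r) = (real p - 1) * (real r - real z) / real z"
      using r by (simp add: field_simps)
    then show ?thesis unfolding ff_def by (simp only:)
  qed
  also have "\<dots> \<le> ln ((real p - 1) * (real r - real z) / (real z - 1))"
  proof (subst ln_le_cancel_iff)
    show "0 < (real p - 1) * (real r - real z) / real z" using r assms by auto
    show "0 < (real p - 1) * (real r - real z) / (real z - 1)" using r assms by auto
    show "(real p - 1) * (real r - real z) / real z \<le> (real p - 1) * (real r - real z) / (real z - 1)"
      using r assms by (intro divide_left_mono mult_pos_pos) auto
  qed
  also have "(real p - 1) * (real r - real z) / (real z - 1) = birth p r z / death p r z"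
  proof -
    have nz: "real p \<noteq> 0" "real r \<noteq> 0" "real r - 1 \<noteq> 0" "real z \<noteq> 0" "real z - 1 \<noteq> 0"
      using r assms by auto
    define K where "K = real p * (real r * (real r - 1))"
    have K: "K \<noteq> 0" using nz by (simp add: K_def)
    have "birth p r z = (real p - 1) * (real z * (real r - real z)) / K"
      unfolding birth_def K_def by simp
    moreover have "death p r z = real z * (real z - 1) / K"
      unfolding death_def K_def by simp
    ultimately have "birth p r z / death p r z = (real p - 1) * (real z * (real r - real z)) / (real z * (real z - 1))"
      using K by simp
    also have "\<dots> = (real p - 1) * (real r - real z) / (real z - 1)"
      using nz by (simp add: field_simps)
    finally show ?thesis by simp
  qed
  also have "ln (birth p r z / death p r z) = - ln (death p r z / birth p r z)"
    using B D by (simp add: ln_div)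
  finally show ?thesis using s1 by linarith
qed

lemma lnW_bound:
  assumes "2 \<le> p" "2 \<le> c" "c \<le> m" "m < r"
  shows "real r * (FF p (real m / real r) - FF p (real c / real r)) \<le> - ln (\<Prod>z\<in>{c..<m}. death p r z / birth p r z)"
proof -
  have pos: "death p r z / birth p r z \<noteq> 0" if "z \<in> {c..<m}" for z
    using that assms death_pos[of z r p] birth_pos[of z r p] by auto
  have "real r * (FF p (real m / real r) - FF p (real c / real r)) =
     (\<Sum>z = c..<m. real r * (FF p (real (Suc z) / real r) - FF p (real z / real r)))"
    using sum_Suc_diff'[OF assms(3), where f="\<lambda>z. FF p (real z / real r)"]
    by (simp add: sum_distrib_left[symmetric] del: of_nat_Suc)
  also have "\<dots> \<le> (\<Sum>z = c..<m. - ln (death p r z / birth p r z))"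
    using assms term_bound[of p _ r] by (intro sum_mono) (simp add: add.commute)
  also have "\<dots> = - ln (\<Prod>z\<in>{c..<m}. death p r z / birth p r z)"
  proof -
    have "ln (\<Prod>z\<in>{c..<m}. death p r z / birth p r z) = (\<Sum>z = c..<m. ln (death p r z / birth p r z))"
      by (rule ln_prod) (use pos in auto)
    then show ?thesis by (simp add: sum_negf)
  qed
  finally show ?thesis .
qed



lemma ceil_ratio:
  assumes "0 < a"
  shows "(\<lambda>r. real (nat \<lceil>a * real r\<rceil>) / real r) \<longlonglongrightarrow> a"
proof (rule tendsto_sandwich[where f="\<lambda>_. a" and h="\<lambda>r. a + 1 / real r"])
  have e: "real (nat \<lceil>a * real r\<rceil>) = real_of_int \<lceil>a * real r\<rceil>" for r
    using assms by (simp add: of_nat_nat)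
  show "\<forall>\<^sub>F r in sequentially. a \<le> real (nat \<lceil>a * real r\<rceil>) / real r"
    using eventually_gt_at_top[of "0::nat"]
  proof eventually_elim
    case (elim r)
    then have "a * real r \<le> real (nat \<lceil>a * real r\<rceil>)" unfolding e by simp
    then show ?case using elim by (simp add: field_simps)
  qed
  show "\<forall>\<^sub>F r in sequentially. real (nat \<lceil>a * real r\<rceil>) / real r \<le> a + 1 / real r"
    using eventually_gt_at_top[of "0::nat"]
  proof eventually_elim
    case (elim r)
    then have "real (nat \<lceil>a * real r\<rceil>) \<le> a * real r + 1" unfolding e
      using of_int_ceiling_diff_one_le[of "a * real r"] by linarith
    then show ?case using elim by (simp add: field_simps)
  qed
  show "(\<lambda>_. a) \<longlonglongrightarrow> a" by simp
  show "(\<lambda>r. a + 1 / real r) \<longlonglongrightarrow> a"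
    using tendsto_add[OF tendsto_const[of a] lim_1_over_n] by simp
qed

lemma FF_cont: "2 \<le> p \<Longrightarrow> 0 < u \<Longrightarrow> u < 1 \<Longrightarrow> isCont (FF p) u"
  using DERIV_FF DERIV_isCont by blast

lemma eventually_big: "\<forall>\<^sub>F r in sequentially. K < real r"
proof -
  obtain n where "K < real n" using reals_Archimedean2 by blast
  then show ?thesis unfolding eventually_sequentially
    by (intro exI[of _ n]) (auto intro: less_le_trans)
qed

theorem lemma4p8:
  fixes p :: nat and \<alpha>0 \<alpha>1 :: real
  assumes "prime p" and "odd p"
    and "0 < \<alpha>0" and "\<alpha>0 < \<alpha>1" and "\<alpha>1 < (real p - 1) / real p"
  shows "\<exists>\<delta> :: nat \<Rightarrow> real. (\<delta> \<longlonglongrightarrow> 0) \<and>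
    (\<forall>r T. r \<ge> 2 \<longrightarrow> T \<le> r ^ 3 \<longrightarrow>
       (\<forall>s \<in> {1..r}. real s \<ge> \<alpha>1 * real r \<longrightarrow>
          measure_pmf.prob (bd_traj p r T s) {xs. \<exists>x \<in> set xs. real x < \<alpha>0 * real r}
            \<le> real T * exp (- (J p \<alpha>0 \<alpha>1 + \<delta> r) * real r)))"
proof -
  have p2: "2 \<le> p" using assms(1) prime_ge_2_nat by blast
  have "(real p - 1) / real p < 1" using p2 by simp
  then have a1: "\<alpha>1 < 1" using assms(5) by linarith
  define JJ where "JJ = J p \<alpha>0 \<alpha>1"
  have JJ: "JJ = FF p \<alpha>1 - FF p \<alpha>0" unfolding JJ_def using J_eq[OF p2] assms a1 by simp
  define cc where "cc r = nat \<lceil>\<alpha>0 * real r\<rceil>" for r :: nat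
  define mm where "mm r = nat \<lceil>\<alpha>1 * real r\<rceil>" for r :: nat
  define good where "good r \<longleftrightarrow> 2 \<le> cc r \<and> mm r < r" for r
  define W where "W r = (\<Prod>z\<in>{cc r..<mm r}. death p r z / birth p r z)" for r
  define xx where "xx r = - ln (W r) / real r - JJ" for r
  define \<delta> where "\<delta> r = (if good r then min (xx r) 0 else - JJ)" for r
  have cA: "real x < \<alpha>0 * real r \<longleftrightarrow> x < cc r" for x r
    unfolding cc_def by (simp add: zless_nat_eq_int_zless less_ceiling_iff)
  have cm: "cc r \<le> mm r" for r
    unfolding cc_def mm_def using assms by (intro nat_mono ceiling_mono mult_right_mono) auto
  have sm: "mm r \<le> s" if "\<alpha>1 * real r \<le> real s" for r s
    unfolding mm_def using that by (simp add: nat_le_iff ceiling_le_iff)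
  have bound: "measure_pmf.prob (bd_traj p r T s) {xs. \<exists>x \<in> set xs. real x < \<alpha>0 * real r}
            \<le> real T * exp (- (JJ + \<delta> r) * real r)"
    if r2: "2 \<le> r" and s: "s \<in> {1..r}" "\<alpha>1 * real r \<le> real s" for r T s
  proof (cases "good r")
    case True
    have g: "2 \<le> cc r" "mm r < r" using True by (auto simp: good_def)
    note hb = hit_bound[OF p2 r2 g(1) cm g(2) cA s(1), of T]
    have ms: "mm r \<le> s" using sm s by auto
    have e1: "{cc r..mm r - 1} = {cc r..<mm r}" using g cm by auto
    have Wpos: "W r > 0" unfolding W_def using g p2
      by (intro prod_pos ballI divide_pos_pos death_pos birth_pos) auto
    have "1 \<le> mm r" using g cm[of r] by linarith
    then have "death p r (mm r) \<le> 1" using bd_bounds[OF p2 r2, of "mm r"] g by auto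
    then have "death p r (mm r) * W r \<le> W r" using Wpos by (simp add: mult_left_le_one_le)
    then have "uu p r \<alpha>0 T s \<le> real T * W r"
      using hb ms e1 by (simp add: W_def) (smt (verit) mult_left_mono of_nat_0_le_iff)
    also have "real T * W r = real T * exp (- (JJ + xx r) * real r)"
      using Wpos r2 by (simp add: xx_def field_simps)
    also have "\<dots> \<le> real T * exp (- (JJ + \<delta> r) * real r)"
      using r2 True by (intro mult_left_mono) (auto simp: \<delta>_def)
    finally show ?thesis by (simp add: uu_def)
  next
    case False
    have "\<alpha>0 * real r < \<alpha>1 * real r" using r2 assms by auto
    then have "measure_pmf.prob (bd_traj p r T s) {xs. \<exists>x \<in> set xs. real x < \<alpha>0 * real r} \<le> real T"
    proof (cases T)
      case 0
      have "\<not> real s < \<alpha>0 * real r" using s \<open>\<alpha>0 * real r < \<alpha>1 * real r\<close> by linarith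
      then show ?thesis using 0 by (simp add: indicator_def)
    next
      case (Suc n)
      then have "1 \<le> real T" by simp
      then show ?thesis using measure_pmf.prob_le_1[of "bd_traj p r T s" "{xs. \<exists>x \<in> set xs. real x < \<alpha>0 * real r}"] by linarith
    qed
    then show ?thesis using False by (simp add: \<delta>_def)
  qed
  have ev_good: "\<forall>\<^sub>F r in sequentially. good r"
    using eventually_big[of "2 / \<alpha>0 + 2 / (1 - \<alpha>1)"]
  proof eventually_elim
    case (elim r)
    have r1: "2 / \<alpha>0 < real r" "2 / (1 - \<alpha>1) < real r"
      using elim assms a1 by (smt (verit) divide_pos_pos)+
    then have "2 < \<alpha>0 * real r" "2 < (1 - \<alpha>1) * real r" using assms a1 by (auto simp: field_simps)
    have "1 < \<lceil>\<alpha>0 * real r\<rceil>" unfolding less_ceiling_iff using \<open>2 < \<alpha>0 * real r\<close> by simp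
    then have c2: "2 \<le> cc r" unfolding cc_def by linarith
    have "(1 - \<alpha>1) * real r = real r - \<alpha>1 * real r" by (simp add: algebra_simps)
    then have "real_of_int \<lceil>\<alpha>1 * real r\<rceil> < real_of_int (int r)"
      using of_int_ceiling_diff_one_le[of "\<alpha>1 * real r"] \<open>2 < (1 - \<alpha>1) * real r\<close>
      by linarith
    then have "\<lceil>\<alpha>1 * real r\<rceil> < int r" by (simp only: of_int_less_iff)
    moreover have "0 \<le> \<alpha>1 * real r" using assms by simp
    then have "0 \<le> \<lceil>\<alpha>1 * real r\<rceil>" by simp
    ultimately have "mm r < r" unfolding mm_def by (simp add: nat_less_iff)
    note c2 this
    then show ?case by (simp add: good_def)
  qed
  define gg where "gg r = FF p (real (mm r) / real r) - FF p (real (cc r) / real r) - JJ" for r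
  have gg_lim: "gg \<longlonglongrightarrow> 0"
  proof -
    have "(\<lambda>r. FF p (real (mm r) / real r)) \<longlonglongrightarrow> FF p \<alpha>1"
      unfolding mm_def using assms a1
      by (intro isCont_tendsto_compose[OF FF_cont[OF p2]] ceil_ratio) auto
    moreover have "(\<lambda>r. FF p (real (cc r) / real r)) \<longlonglongrightarrow> FF p \<alpha>0"
      unfolding cc_def using assms a1
      by (intro isCont_tendsto_compose[OF FF_cont[OF p2]] ceil_ratio) auto
    ultimately have "gg \<longlonglongrightarrow> FF p \<alpha>1 - FF p \<alpha>0 - JJ"
      unfolding gg_def[abs_def] by (intro tendsto_intros)
    then show ?thesis using JJ by simp
  qed
  have "\<delta> \<longlonglongrightarrow> 0"
  proof (rule tendsto_sandwich[where f="\<lambda>r. min (gg r) 0" and h="\<lambda>_. 0"])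
    show "\<forall>\<^sub>F r in sequentially. min (gg r) 0 \<le> \<delta> r"
      using ev_good
    proof eventually_elim
      case (elim r)
      have g: "2 \<le> cc r" "mm r < r" using elim by (auto simp: good_def)
      have "real r * (FF p (real (mm r) / real r) - FF p (real (cc r) / real r)) \<le> - ln (W r)"
        unfolding W_def by (rule lnW_bound[OF p2 g(1) cm g(2)])
      then have "gg r \<le> xx r" using g unfolding gg_def xx_def by (simp add: field_simps)
      then show ?case using elim by (simp add: \<delta>_def)
    qed
    show "\<forall>\<^sub>F r in sequentially. \<delta> r \<le> 0"
      using ev_good by eventually_elim (simp add: \<delta>_def)
    show "(\<lambda>r. min (gg r) 0) \<longlonglongrightarrow> 0"
      using tendsto_min[OF gg_lim tendsto_const[of 0]] by simp
  qed simp
  then show ?thesis using bound unfolding JJ_def by blast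
qed


end
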